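(* Let $G = K_{m_1} \otimes \cdots \otimes K_{m_t}$ with $m_i \geq 3$ for all $i$, and let $W$ be a resolving set of $G$. Then for every $1 \le i \le t$, $|V(K_{m_i}) \setminus W(i)| \leq 1$.
   Context: $K_r$ is the complete graph on $r$ vertices. The tensor product of graphs has vertex set the Cartesian product of vertex sets, with $(a_1,\dots,a_t)$ adjacent to $(b_1,\dots,b_t)$ iff $a_ib_i$ is an edge of the $i$-th factor for every $i$. For $T \subseteq A_1\times\cdots\times A_t$, $T(i)\subseteq A_i$ denotes the set of elements of $A_i$ appearing as the $i$-th coordinate of some element of $T$. For a connected graph and an ordered set $W=\{w_1,\dots,w_k\}$ of vertices, $r(v\mid W)=(d(v,w_1),\dots,d(v,w_k))$; $W$ is a resolving set if distinct vertices have distinct representations. *)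

theory Defs
  imports Main
begin

text \<open>Vertices of the tensor product K_{m_0} x ... x K_{m_{t-1}}: lists of length t
  whose i-th entry lies in V(K_{m_i}) = {0..<m i}.\<close>
definition tensor_verts :: "nat \<Rightarrow> (nat \<Rightarrow> nat) \<Rightarrow> nat list set" where
  "tensor_verts t m = {xs. length xs = t \<and> (\<forall>i<t. xs ! i < m i)}"

text \<open>Adjacency: every coordinate pair is an edge of the complete graph, i.e. distinct.\<close>
definition tensor_adj :: "nat \<Rightarrow> (nat \<Rightarrow> nat) \<Rightarrow> nat list \<Rightarrow> nat list \<Rightarrow> bool" where
  "tensor_adj t m xs ys \<longleftrightarrow> xs \<in> tensor_verts t m \<and> ys \<in> tensor_verts t m \<and>
     (\<forall>i<t. xs ! i \<noteq> ys ! i)"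

fun walk_of_len :: "('a \<Rightarrow> 'a \<Rightarrow> bool) \<Rightarrow> nat \<Rightarrow> 'a \<Rightarrow> 'a \<Rightarrow> bool" where
  "walk_of_len E 0 x y \<longleftrightarrow> x = y"
| "walk_of_len E (Suc n) x y \<longleftrightarrow> (\<exists>z. E x z \<and> walk_of_len E n z y)"

definition gdist :: "('a \<Rightarrow> 'a \<Rightarrow> bool) \<Rightarrow> 'a \<Rightarrow> 'a \<Rightarrow> nat" where
  "gdist E x y = (LEAST n. walk_of_len E n x y)"

definition resolving_set :: "'a set \<Rightarrow> ('a \<Rightarrow> 'a \<Rightarrow> bool) \<Rightarrow> 'a set \<Rightarrow> bool" where
  "resolving_set V E W \<longleftrightarrow> W \<subseteq> V \<and>
     (\<forall>u\<in>V. \<forall>v\<in>V. (\<forall>w\<in>W. gdist E u w = gdist E v w) \<longrightarrow> u = v)"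

end

theory Submission
  imports Defs
begin

definition sw :: "nat \<Rightarrow> nat \<Rightarrow> nat \<Rightarrow> nat" where
  "sw a b x = (if x = a then b else if x = b then a else x)"

definition phi :: "nat \<Rightarrow> nat \<Rightarrow> nat \<Rightarrow> nat list \<Rightarrow> nat list" where
  "phi i a b xs = xs[i := sw a b (xs ! i)]"

lemma phi_invol: "a \<noteq> b \<Longrightarrow> phi i a b (phi i a b xs) = xs"
  by (cases "i < length xs") (auto simp: phi_def sw_def list_update_beyond)

lemma phi_len[simp]: "length (phi i a b xs) = length xs"
  by (simp add: phi_def)

lemma phi_nth: "j < length xs \<Longrightarrow> phi i a b xs ! j = (if j = i then sw a b (xs ! i) else xs ! j)"
  by (simp add: phi_def nth_list_update)

lemma phi_adj:
  assumes "a < m i" "b < m i" "a \<noteq> b"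
  shows "tensor_adj t m (phi i a b x) (phi i a b y) = tensor_adj t m x y"
proof -
  have inj: "sw a b p = sw a b q \<longleftrightarrow> p = q" for p q
    using assms by (auto simp: sw_def)
  have lt: "sw a b p < m i \<longleftrightarrow> p < m i" for p
    using assms by (auto simp: sw_def)
  have v: "phi i a b z \<in> tensor_verts t m \<longleftrightarrow> z \<in> tensor_verts t m" for z
  proof -
    have "(phi i a b z ! j < m j) = (z ! j < m j)" if "j < length z" for j
      using that lt by (simp add: phi_nth)
    then show ?thesis unfolding tensor_verts_def by auto
  qed
  have d: "(phi i a b x ! j \<noteq> phi i a b y ! j) = (x ! j \<noteq> y ! j)"
    if "j < length x" "j < length y" for j
    using that inj by (simp add: phi_nth)
  show ?thesis unfolding tensor_adj_def v
    using d by (auto simp: tensor_verts_def)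
qed

lemma phi_walk:
  assumes "a < m i" "b < m i" "a \<noteq> b"
  shows "walk_of_len (tensor_adj t m) n x y \<Longrightarrow> walk_of_len (tensor_adj t m) n (phi i a b x) (phi i a b y)"
proof (induction n arbitrary: x)
  case 0 then show ?case by simp
next
  case (Suc n)
  then obtain z where "tensor_adj t m x z" "walk_of_len (tensor_adj t m) n z y" by auto
  then have "tensor_adj t m (phi i a b x) (phi i a b z)"
    "walk_of_len (tensor_adj t m) n (phi i a b z) (phi i a b y)"
    using Suc.IH phi_adj[where m=m and t=t, OF assms(1) assms(2) assms(3)] by simp_all
  then show ?case by (simp only: walk_of_len.simps) blast
qed

lemma phi_gdist:
  assumes "a < m i" "b < m i" "a \<noteq> b"
  shows "gdist (tensor_adj t m) (phi i a b x) (phi i a b y) = gdist (tensor_adj t m) x y"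
proof -
  have "walk_of_len (tensor_adj t m) n (phi i a b x) (phi i a b y) = walk_of_len (tensor_adj t m) n x y" for n
    using phi_walk[where m=m and t=t and i=i, OF assms, of n x y] phi_walk[where m=m and t=t and i=i, OF assms, of n "phi i a b x" "phi i a b y"]
    by (auto simp: phi_invol[OF assms(3)])
  then show ?thesis by (simp add: gdist_def)
qed

theorem lemma2p2:
  fixes t :: nat and m :: "nat \<Rightarrow> nat" and W :: "nat list set"
  assumes "\<forall>i<t. m i \<ge> 3"
    and "resolving_set (tensor_verts t m) (tensor_adj t m) W"
  shows "\<forall>i<t. card ({0..<m i} - (\<lambda>w. w ! i) ` W) \<le> 1"
proof (intro allI impI)
  fix i assume i: "i < t"
  let ?S = "{0..<m i} - (\<lambda>w. w ! i) ` W"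
  have "\<forall>a\<in>?S. \<forall>b\<in>?S. a = b"
  proof (intro ballI, rule ccontr)
    fix a b assume a: "a \<in> ?S" and b: "b \<in> ?S" and ne: "a \<noteq> b"
    have am: "a < m i" and bm: "b < m i" using a b by auto
    define u where "u = (replicate t 0)[i := a]"
    define v where "v = (replicate t 0)[i := b]"
    have vert: "(replicate t 0)[i := c] \<in> tensor_verts t m" if "c < m i" for c
    proof -
      have "(replicate t 0)[i := c] ! j < m j" if "j < t" for j
      proof (cases "j = i")
        case True
        have "(replicate t 0)[i := c] ! i = c" using i by (simp only: nth_list_update_eq length_replicate)
        then show ?thesis using True \<open>c < m i\<close> by simp
      next
        case False then have "(replicate t 0)[i := c] ! j = 0" using that
          by (simp only: nth_list_update_neq nth_replicate)
        moreover have "m j \<ge> 3" using assms(1) that by blast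
        ultimately show ?thesis by simp
      qed
      then show ?thesis unfolding tensor_verts_def by (simp only: length_list_update length_replicate mem_Collect_eq) blast
    qed
    have uV: "u \<in> tensor_verts t m" and vV: "v \<in> tensor_verts t m"
      unfolding u_def v_def by (rule vert[OF am], rule vert[OF bm])
    have pu: "phi i a b u = v" using i by (simp add: u_def v_def phi_def sw_def)
    have "\<forall>w\<in>W. gdist (tensor_adj t m) u w = gdist (tensor_adj t m) v w"
    proof
      fix w assume w: "w \<in> W"
      have "length w = t" using w assms(2) by (auto simp: resolving_set_def tensor_verts_def)
      moreover have "w ! i \<noteq> a" "w ! i \<noteq> b" using w a b by (metis DiffD2 image_eqI)+
      ultimately have "phi i a b w = w" using i by (simp add: phi_def sw_def)
      then show "gdist (tensor_adj t m) u w = gdist (tensor_adj t m) v w"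
        using phi_gdist[where m=m and t=t and i=i, OF am bm ne, of u w] pu by simp
    qed
    moreover have "\<forall>u\<in>tensor_verts t m. \<forall>v\<in>tensor_verts t m. (\<forall>w\<in>W. gdist (tensor_adj t m) u w = gdist (tensor_adj t m) v w) \<longrightarrow> u = v"
      using assms(2) unfolding resolving_set_def by (rule conjunct2)
    ultimately have "u = v" using uV vV by blast
    then have "u ! i = v ! i" by simp
    moreover have "u ! i = a" using i unfolding u_def by (simp only: nth_list_update_eq length_replicate)
    moreover have "v ! i = b" using i unfolding v_def by (simp only: nth_list_update_eq length_replicate)
    ultimately show False using ne by simp
  qed
  moreover have "finite ?S" by (rule finite_Diff, rule finite_atLeastLessThan)
  ultimately have "card ?S \<le> Suc 0" using card_le_Suc0_iff_eq[of ?S] by blast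
  then show "card ?S \<le> 1" by simp
qed

end
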